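(* Let $B\subset\mathbb{R}^2$ be the open unit disk centered at $0$ and $\Lambda_p'=\inf_{u\in H_{as}\setminus\{0\}}\frac{\|\nabla u\|_2^2}{\|u\|_p^2}$ for $p\ge2$. Then $\Lambda_p'\to0$ as $p\to\infty$.
   Context: $H_{za}(B)=\{u\in H^1(B):\int_B u=0\}$. $H_{as}$ is the set of $u\in H_{za}(B)$ with $u(-x_1,x_2)=u(x_1,x_2)$ and $u(x_1,-x_2)=-u(x_1,x_2)$ for $(x_1,x_2)\in B$. *)

theory Defs
  imports "HOL-Analysis.Analysis"
begin

definition diskB :: "(real^2) set" where
  "diskB = ball 0 1"

definition partial :: "2 \<Rightarrow> (real^2 \<Rightarrow> real) \<Rightarrow> real^2 \<Rightarrow> real" where
  "partial i f x = deriv (\<lambda>t. f (x + t *\<^sub>R axis i 1)) 0"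

fun Ck :: "nat \<Rightarrow> (real^2 \<Rightarrow> real) \<Rightarrow> bool" where
  "Ck 0 f = continuous_on UNIV f"
| "Ck (Suc k) f = (continuous_on UNIV f \<and>
      (\<forall>i x. (\<lambda>t. f (x + t *\<^sub>R axis i 1)) differentiable (at 0)) \<and>
      (\<forall>i. Ck k (partial i f)))"

definition smooth_fun :: "(real^2 \<Rightarrow> real) \<Rightarrow> bool" where
  "smooth_fun f \<longleftrightarrow> (\<forall>k. Ck k f)"

definition test_fun :: "(real^2 \<Rightarrow> real) \<Rightarrow> bool" where
  "test_fun \<phi> \<longleftrightarrow> smooth_fun \<phi> \<and> compact (closure {x. \<phi> x \<noteq> 0})
                  \<and> closure {x. \<phi> x \<noteq> 0} \<subseteq> diskB"

definition L2B :: "(real^2 \<Rightarrow> real) \<Rightarrow> bool" where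
  "L2B f \<longleftrightarrow> f \<in> borel_measurable (lebesgue_on diskB)
             \<and> integrable (lebesgue_on diskB) (\<lambda>x. (f x)^2)"

definition weak_grad :: "(real^2 \<Rightarrow> real) \<Rightarrow> (2 \<Rightarrow> real^2 \<Rightarrow> real) \<Rightarrow> bool" where
  "weak_grad u g \<longleftrightarrow> (\<forall>i. L2B (g i)) \<and>
     (\<forall>\<phi> i. test_fun \<phi> \<longrightarrow>
        integral\<^sup>L (lebesgue_on diskB) (\<lambda>x. u x * partial i \<phi> x)
        = - integral\<^sup>L (lebesgue_on diskB) (\<lambda>x. g i x * \<phi> x))"

definition H1B :: "(real^2 \<Rightarrow> real) \<Rightarrow> bool" where
  "H1B u \<longleftrightarrow> L2B u \<and> (\<exists>g. weak_grad u g)"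

definition H_za :: "(real^2 \<Rightarrow> real) \<Rightarrow> bool" where
  "H_za u \<longleftrightarrow> H1B u \<and> integral\<^sup>L (lebesgue_on diskB) u = 0"

definition H_as :: "(real^2 \<Rightarrow> real) \<Rightarrow> bool" where
  "H_as u \<longleftrightarrow> H_za u \<and>
     (\<forall>x\<in>diskB. u (vector [- (x$1), x$2]) = u x \<and> u (vector [x$1, - (x$2)]) = - u x)"

definition Lambda' :: "real \<Rightarrow> real" where
  "Lambda' p = Inf {(integral\<^sup>L (lebesgue_on diskB) (\<lambda>x. (g 1 x)^2 + (g 2 x)^2))
                      / (integral\<^sup>L (lebesgue_on diskB) (\<lambda>x. \<bar>u x\<bar> powr p)) powr (2 / p)
                    | u g. H_as u \<and> weak_grad u g \<and> \<not> (AE x in lebesgue_on diskB. u x = 0)}"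

end

theory Submission
  imports Defs
begin


lemma ibp_line:
  fixes F F' :: "real^2 \<Rightarrow> real" and e :: "real^2" and K :: "(real^2) set"
  assumes K: "compact K" and F0: "\<And>x. x \<notin> K \<Longrightarrow> F x = 0" and F'0: "\<And>x. x \<notin> K \<Longrightarrow> F' x = 0"
    and cF: "continuous_on UNIV F" and cF': "continuous_on UNIV F'"
    and D: "\<And>x. ((\<lambda>t. F (x + t *\<^sub>R e)) has_real_derivative F' x) (at 0)"
    and e: "norm e \<le> 1"
  shows "integral UNIV F' = 0"
proof -
  obtain c where c: "\<forall>x\<in>K. norm x \<le> c" using compact_imp_bounded[OF K] by (auto simp: bounded_iff)
  obtain a where a: "cball (0::real^2) (c+1) \<subseteq> cbox (-a) a"
    using bounded_subset_cbox_symmetric[of "cball (0::real^2) (c+1)"] by (meson bounded_cball)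
  define Bx where "Bx = cbox (-a) a"
  have KB: "x + s *\<^sub>R e \<in> K \<Longrightarrow> x \<in> Bx" if "s \<in> {-1..1}" for x s
  proof -
    assume "x + s *\<^sub>R e \<in> K"
    then have "norm (x + s *\<^sub>R e) \<le> c" using c by blast
    moreover have "norm (s *\<^sub>R e) \<le> 1" using that e by (auto simp: abs_le_iff mult_le_one)
    ultimately have "norm x \<le> c + 1" using norm_triangle_ineq4[of "x + s *\<^sub>R e" "s *\<^sub>R e"] by simp
    then show ?thesis using a unfolding Bx_def by (auto simp: subset_iff)
  qed
  have KBx: "K \<subseteq> Bx" using KB[of 0] by auto
  have Fint: "(F has_integral integral Bx F) S" if S: "K \<subseteq> S" "S = cbox p q" for S p q
  proof -
    have "F integrable_on S" using S cF by (auto intro: integrable_continuous continuous_on_subset)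
    then have "(F has_integral integral S F) S" by (simp add: integrable_integral)
    moreover have "integral S F = integral Bx F"
    proof -
      have "integral S F = integral UNIV (\<lambda>x. if x \<in> S then F x else 0)"
        by (simp add: integral_restrict_UNIV)
      also have "\<dots> = integral UNIV (\<lambda>x. if x \<in> Bx then F x else 0)"
        by (rule arg_cong[where f="integral UNIV"], rule ext) (use S KBx F0 in \<open>auto\<close>)
      also have "\<dots> = integral Bx F" by (simp add: integral_restrict_UNIV)
      finally show ?thesis .
    qed
    ultimately show ?thesis by simp
  qed
  have J: "integral Bx (\<lambda>x. F (x + s *\<^sub>R e)) = integral Bx F" if s: "s \<in> {-1..1}" for s
  proof -
    have sub: "K \<subseteq> cbox (-a + s *\<^sub>R e) (a + s *\<^sub>R e)"
    proof
      fix y assume "y \<in> K"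
      then have "(y - s *\<^sub>R e) + s *\<^sub>R e \<in> K" by simp
      then have "y - s *\<^sub>R e \<in> cbox (-a) a" using KB[OF s] Bx_def by blast
      then show "y \<in> cbox (-a + s *\<^sub>R e) (a + s *\<^sub>R e)"
        unfolding mem_box_cart by (smt (verit) vector_add_component vector_minus_component vector_scaleR_component)
    qed
    have "((F \<circ> (+) (s *\<^sub>R e)) has_integral integral Bx F) (cbox (-a) a)"
      by (subst has_integral_shift_cbox_iff) (rule Fint[OF sub refl])
    moreover have "(\<lambda>x. F (x + s *\<^sub>R e)) = F \<circ> (+) (s *\<^sub>R e)"
      by (rule ext) (simp add: add.commute)
    ultimately show ?thesis unfolding Bx_def by (metis integral_unique)
  qed
  have Dl: "((\<lambda>r. F (x + r *\<^sub>R e)) has_real_derivative F' (x + s *\<^sub>R e)) (at s)" for x s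
  proof -
    have "((\<lambda>t. F ((x + s *\<^sub>R e) + t *\<^sub>R e)) has_real_derivative F' (x + s *\<^sub>R e)) (at 0)"
      by (rule D)
    moreover have "(\<lambda>t. F ((x + s *\<^sub>R e) + t *\<^sub>R e)) = (\<lambda>t. (\<lambda>r. F (x + r *\<^sub>R e)) (t + s))"
      by (rule ext) (simp add: algebra_simps)
    ultimately show ?thesis using DERIV_shift[of "\<lambda>r. F (x + r *\<^sub>R e)" _ 0 s] by simp
  qed
  have der: "((\<lambda>s. integral (cbox (-a) a) (\<lambda>x. F (x + s *\<^sub>R e))) has_field_derivative
      integral (cbox (-a) a) (\<lambda>x. F' (x + 0 *\<^sub>R e))) (at 0 within {-1..1})"
  proof (rule leibniz_rule_field_derivative[where f="\<lambda>s x. F (x + s *\<^sub>R e)" and fx="\<lambda>s x. F' (x + s *\<^sub>R e)"])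
    show "((\<lambda>s. F (t + s *\<^sub>R e)) has_field_derivative F' (t + s *\<^sub>R e)) (at s within {-1..1})" for s t
      using Dl has_field_derivative_at_within by blast
    show "(\<lambda>x. F (x + s *\<^sub>R e)) integrable_on cbox (- a) a" for s
      by (intro integrable_continuous continuous_on_compose2[OF cF] continuous_intros) auto
    show "continuous_on ({-1..1} \<times> cbox (- a) a) (\<lambda>(s, x). F' (x + s *\<^sub>R e))"
      unfolding case_prod_unfold by (intro continuous_on_compose2[OF cF'] continuous_intros) auto
  qed auto
  have "((\<lambda>s. integral Bx F) has_field_derivative integral Bx F') (at 0 within {-1..1})"
    using has_field_derivative_transform_within[OF der[folded Bx_def], of 1] J by simp
  moreover have eqat: "at (0::real) within {-1..1} = at 0" by (rule at_within_Icc_at) auto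
  ultimately have "((\<lambda>s. integral Bx F) has_field_derivative integral Bx F') (at 0)"
    by simp
  then have Z: "integral Bx F' = 0" using DERIV_const DERIV_unique by blast
  have "integral UNIV F' = integral UNIV (\<lambda>x. if x \<in> Bx then F' x else 0)"
    by (rule arg_cong[where f="integral UNIV"], rule ext) (use KBx F'0 in \<open>auto\<close>)
  also have "\<dots> = 0" using Z by (simp add: integral_restrict_UNIV)
  finally show ?thesis .
qed


lemma diskB_sets: "diskB \<in> sets lebesgue"
  unfolding diskB_def by (metis fmeasurableD lmeasurable_ball)

lemma diskB_sub: "diskB \<subseteq> cbox (-1) 1"
proof
  fix x :: "real^2" assume "x \<in> diskB"
  then have "norm x < 1" by (simp add: diskB_def)
  then have "\<bar>x$i\<bar> \<le> 1" for i using component_le_norm_cart[of x i] by linarith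
  then show "x \<in> cbox (-1) 1" by (auto simp: mem_box_cart abs_le_iff)
qed

lemma cont_int:
  fixes f :: "real^2 \<Rightarrow> real"
  assumes "continuous_on UNIV f"
  shows "integrable (lebesgue_on diskB) f"
proof -
  have "f absolutely_integrable_on cbox (-1) 1"
    using assms by (intro absolutely_integrable_continuous continuous_on_subset[OF assms]) auto
  then have "f absolutely_integrable_on diskB"
    using set_integrable_subset diskB_sets diskB_sub by blast
  then show ?thesis
    using diskB_sets by (simp add: integrable_restrict_space set_integrable_def)
qed

lemma cont_L2B:
  fixes f :: "real^2 \<Rightarrow> real"
  assumes "continuous_on UNIV f"
  shows "L2B f"
  unfolding L2B_def
proof -
  have "continuous_on diskB f" using continuous_on_subset[OF assms] by blast
  then show "f \<in> borel_measurable (lebesgue_on diskB) \<and> integrable (lebesgue_on diskB) (\<lambda>x. (f x)\<^sup>2)"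
    using assms diskB_sets
    by (auto intro!: continuous_imp_measurable_on_sets_lebesgue cont_int continuous_intros)
qed

lemma vanish_int:
  fixes f :: "real^2 \<Rightarrow> real"
  assumes "\<And>x. x \<notin> S \<Longrightarrow> f x = 0"
  shows "integral UNIV f = integral S f"
proof -
  have "f = (\<lambda>x. if x \<in> S then f x else 0)" using assms by auto
  then show ?thesis by (metis integral_restrict_UNIV)
qed

lemma weak_grad_C1:
  fixes u :: "real^2 \<Rightarrow> real" and G :: "2 \<Rightarrow> real^2 \<Rightarrow> real"
  assumes cu: "continuous_on UNIV u" and cG: "\<And>i. continuous_on UNIV (G i)"
    and Du: "\<And>i x. ((\<lambda>t. u (x + t *\<^sub>R axis i 1)) has_real_derivative G i x) (at 0)"
  shows "weak_grad u G"
  unfolding weak_grad_def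
proof (intro conjI allI impI)
  show "L2B (G i)" for i by (rule cont_L2B[OF cG])
  fix \<phi> i assume tf: "test_fun \<phi>"
  define e :: "real^2" where "e = axis i 1"
  define K where "K = closure {x. \<phi> x \<noteq> 0}"
  have K: "compact K" "K \<subseteq> diskB" using tf unfolding test_fun_def K_def by auto
  have "Ck (Suc 0) \<phi>" using tf unfolding test_fun_def smooth_fun_def by blast
  then have cphi: "continuous_on UNIV \<phi>" and dphi: "\<And>x. (\<lambda>t. \<phi> (x + t *\<^sub>R e)) differentiable (at 0)"
    and cdphi: "continuous_on UNIV (partial i \<phi>)" unfolding e_def by auto
  have Dphi: "((\<lambda>t. \<phi> (x + t *\<^sub>R e)) has_real_derivative partial i \<phi> x) (at 0)" for x
    using dphi[of x] unfolding DERIV_deriv_iff_real_differentiable[symmetric] partial_def e_def .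
  have phi0: "\<phi> x = 0" if "x \<notin> K" for x using that closure_subset[of "{x. \<phi> x \<noteq> 0}"] unfolding K_def by auto
  have dphi0: "partial i \<phi> x = 0" if x: "x \<notin> K" for x
  proof -
    have "open (- K)" using compact_imp_closed[OF K(1)] by (simp add: open_Compl)
    then obtain d where d: "d > 0" "ball x d \<subseteq> - K" using x open_contains_ball[of "- K"] by auto
    have "((\<lambda>t. 0::real) has_real_derivative 0) (at 0)" by simp
    then have "((\<lambda>t. \<phi> (x + t *\<^sub>R e)) has_real_derivative 0) (at 0)"
    proof (rule has_field_derivative_transform_within[where d=d])
      fix t :: real assume "t \<in> UNIV" "dist t 0 < d"
      then have "x + t *\<^sub>R e \<in> ball x d" by (simp add: dist_norm e_def)
      then show "0 = \<phi> (x + t *\<^sub>R e)" using d phi0 by auto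
    qed (use d in auto)
    then show ?thesis using Dphi[of x] DERIV_unique by blast
  qed
  define F where "F x = u x * \<phi> x" for x
  define F' where "F' x = G i x * \<phi> x + u x * partial i \<phi> x" for x
  have "integral UNIV F' = 0"
  proof (rule ibp_line[OF K(1), of F F' e])
    show "F x = 0" if "x \<notin> K" for x using phi0[OF that] by (simp add: F_def)
    show "F' x = 0" if "x \<notin> K" for x using phi0[OF that] dphi0[OF that] by (simp add: F'_def)
    show "continuous_on UNIV F" unfolding F_def by (intro continuous_intros cu cphi)
    show "continuous_on UNIV F'" unfolding F'_def by (intro continuous_intros cG cu cphi cdphi)
    show "norm e \<le> 1" by (simp add: e_def)
    show "((\<lambda>t. F (x + t *\<^sub>R e)) has_real_derivative F' x) (at 0)" for x
      using DERIV_mult[OF Du[where i=i and x=x, folded e_def] Dphi[of x]] by (simp add: F_def F'_def algebra_simps)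
  qed
  moreover have "integral UNIV F' = integral diskB F'"
  proof (rule vanish_int)
    fix x assume "x \<notin> diskB"
    then have "x \<notin> K" using K(2) by blast
    then show "F' x = 0" using phi0 dphi0 by (simp add: F'_def)
  qed
  moreover have i1: "integrable (lebesgue_on diskB) (\<lambda>x. G i x * \<phi> x)"
    by (intro cont_int continuous_intros cG cphi)
  moreover have i2: "integrable (lebesgue_on diskB) (\<lambda>x. u x * partial i \<phi> x)"
    by (intro cont_int continuous_intros cu cdphi)
  ultimately have "integral diskB (\<lambda>x. G i x * \<phi> x) + integral diskB (\<lambda>x. u x * partial i \<phi> x) = 0"
    unfolding F'_def
    by (subst integral_add[symmetric]) (auto intro!: integrable_on_lebesgue_on diskB_sets)
  then show "integral\<^sup>L (lebesgue_on diskB) (\<lambda>x. u x * partial i \<phi> x) =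
        - integral\<^sup>L (lebesgue_on diskB) (\<lambda>x. G i x * \<phi> x)"
    using lebesgue_integral_eq_integral[OF i1 diskB_sets] lebesgue_integral_eq_integral[OF i2 diskB_sets]
    by linarith
qed



definition pa :: "real^2" where "pa = axis 2 (-1/2)"
definition pb :: "real^2" where "pb = axis 2 (1/2)"
definition Aq :: "real \<Rightarrow> real^2 \<Rightarrow> real" where "Aq \<epsilon> x = (norm (x - pa))\<^sup>2 + \<epsilon>"
definition Bq :: "real \<Rightarrow> real^2 \<Rightarrow> real" where "Bq \<epsilon> x = (norm (x - pb))\<^sup>2 + \<epsilon>"
definition UU :: "real \<Rightarrow> real^2 \<Rightarrow> real" where "UU \<epsilon> x = ln (Aq \<epsilon> x) - ln (Bq \<epsilon> x)"
definition GG :: "real \<Rightarrow> 2 \<Rightarrow> real^2 \<Rightarrow> real" where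
  "GG \<epsilon> i x = 2 * ((x - pa) $ i) / Aq \<epsilon> x - 2 * ((x - pb) $ i) / Bq \<epsilon> x"

lemma norm2_line_deriv:
  fixes y e :: "real^2"
  shows "((\<lambda>t. (norm (y + t *\<^sub>R e))\<^sup>2) has_real_derivative 2 * (y \<bullet> e)) (at 0)"
proof -
  have eq: "(\<lambda>t. (norm (y + t *\<^sub>R e))\<^sup>2) = (\<lambda>t. y \<bullet> y + 2 * t * (y \<bullet> e) + t\<^sup>2 * (e \<bullet> e))"
  proof (rule ext)
    fix t
    have "(norm (y + t *\<^sub>R e))\<^sup>2 = (y + t *\<^sub>R e) \<bullet> (y + t *\<^sub>R e)" by (simp add: dot_square_norm)
    also have "\<dots> = y \<bullet> y + 2 * t * (y \<bullet> e) + t\<^sup>2 * (e \<bullet> e)"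
      by (simp add: inner_add_left inner_add_right inner_commute algebra_simps power2_eq_square)
    finally show "(norm (y + t *\<^sub>R e))\<^sup>2 = y \<bullet> y + 2 * t * (y \<bullet> e) + t\<^sup>2 * (e \<bullet> e)" .
  qed
  have "((\<lambda>t. y \<bullet> y + 2 * t * (y \<bullet> e) + t\<^sup>2 * (e \<bullet> e)) has_real_derivative 2 * (y \<bullet> e)) (at 0)"
    by (auto intro!: derivative_eq_intros)
  then show ?thesis unfolding eq .
qed

lemma Aq_pos: "\<epsilon> > 0 \<Longrightarrow> Aq \<epsilon> x > 0" unfolding Aq_def by (simp add: add_nonneg_pos)
lemma Bq_pos: "\<epsilon> > 0 \<Longrightarrow> Bq \<epsilon> x > 0" unfolding Bq_def by (simp add: add_nonneg_pos)

lemma cont_Aq: "continuous_on UNIV (Aq \<epsilon>)" unfolding Aq_def by (intro continuous_intros)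
lemma cont_Bq: "continuous_on UNIV (Bq \<epsilon>)" unfolding Bq_def by (intro continuous_intros)

lemma cont_UU: "\<epsilon> > 0 \<Longrightarrow> continuous_on UNIV (UU \<epsilon>)"
  unfolding UU_def using Aq_pos Bq_pos
  by (intro continuous_intros cont_Aq cont_Bq) (auto simp: less_imp_neq[symmetric])

lemma cont_GG: "\<epsilon> > 0 \<Longrightarrow> continuous_on UNIV (GG \<epsilon> i)"
  unfolding GG_def using Aq_pos Bq_pos
  by (intro continuous_intros cont_Aq cont_Bq) (auto simp: less_imp_neq[symmetric])

lemma deriv_UU:
  assumes "\<epsilon> > 0"
  shows "((\<lambda>t. UU \<epsilon> (x + t *\<^sub>R axis i 1)) has_real_derivative GG \<epsilon> i x) (at 0)"
proof -
  let ?e = "axis i (1::real)"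
  have dA: "((\<lambda>t. Aq \<epsilon> (x + t *\<^sub>R ?e)) has_real_derivative 2 * ((x - pa) \<bullet> ?e)) (at 0)"
  proof -
    have "(\<lambda>t. Aq \<epsilon> (x + t *\<^sub>R ?e)) = (\<lambda>t. (norm ((x - pa) + t *\<^sub>R ?e))\<^sup>2 + \<epsilon>)"
      by (rule ext) (simp add: Aq_def algebra_simps)
    then show ?thesis using DERIV_add[OF norm2_line_deriv[of "x - pa" ?e] DERIV_const[of \<epsilon>]] by simp
  qed
  have dB: "((\<lambda>t. Bq \<epsilon> (x + t *\<^sub>R ?e)) has_real_derivative 2 * ((x - pb) \<bullet> ?e)) (at 0)"
  proof -
    have "(\<lambda>t. Bq \<epsilon> (x + t *\<^sub>R ?e)) = (\<lambda>t. (norm ((x - pb) + t *\<^sub>R ?e))\<^sup>2 + \<epsilon>)"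
      by (rule ext) (simp add: Bq_def algebra_simps)
    then show ?thesis using DERIV_add[OF norm2_line_deriv[of "x - pb" ?e] DERIV_const[of \<epsilon>]] by simp
  qed
  have "((\<lambda>t. ln (Aq \<epsilon> (x + t *\<^sub>R ?e)) - ln (Bq \<epsilon> (x + t *\<^sub>R ?e))) has_real_derivative
      (1 / Aq \<epsilon> (x + 0 *\<^sub>R ?e)) * (2 * ((x - pa) \<bullet> ?e)) - (1 / Bq \<epsilon> (x + 0 *\<^sub>R ?e)) * (2 * ((x - pb) \<bullet> ?e))) (at 0)"
    by (intro DERIV_diff DERIV_chain2[OF DERIV_ln_divide[OF Aq_pos[OF assms]] dA]
        DERIV_chain2[OF DERIV_ln_divide[OF Bq_pos[OF assms]] dB])
  then show ?thesis unfolding UU_def GG_def by (simp add: inner_axis)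
qed


lemma norm_sq2: "(norm (z::real^2))\<^sup>2 = (z$1)\<^sup>2 + (z$2)\<^sup>2"
proof -
  have "(norm z)\<^sup>2 = z \<bullet> z" by (simp add: dot_square_norm)
  also have "\<dots> = (z$1)\<^sup>2 + (z$2)\<^sup>2" by (simp add: inner_vec_def sum_2 power2_eq_square)
  finally show ?thesis .
qed

lemma pa_comp: "pa $ 1 = 0" "pa $ 2 = -1/2" by (simp_all add: pa_def axis_def)
lemma pb_comp: "pb $ 1 = 0" "pb $ 2 = 1/2" by (simp_all add: pb_def axis_def)
lemma pa_pb: "pa = - pb" by (simp add: vec_eq_iff pa_def pb_def axis_def)

lemma Aq_coord: "Aq \<epsilon> x = (x$1)\<^sup>2 + (x$2 + 1/2)\<^sup>2 + \<epsilon>"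
  by (simp add: Aq_def norm_sq2 pa_comp)
lemma Bq_coord: "Bq \<epsilon> x = (x$1)\<^sup>2 + (x$2 - 1/2)\<^sup>2 + \<epsilon>"
  by (simp add: Bq_def norm_sq2 pb_comp)

lemma UU_sym1: "UU \<epsilon> (vector [- (x$1), x$2]) = UU \<epsilon> x"
  by (simp add: UU_def Aq_coord Bq_coord)
lemma UU_sym2: "UU \<epsilon> (vector [x$1, - (x$2)]) = - UU \<epsilon> x"
proof -
  have "Aq \<epsilon> (vector [x$1, - (x$2)]) = Bq \<epsilon> x" "Bq \<epsilon> (vector [x$1, - (x$2)]) = Aq \<epsilon> x"
    by (simp_all add: Aq_coord Bq_coord power2_eq_square algebra_simps)
  then show ?thesis by (simp add: UU_def)
qed

lemma UU_odd: "UU \<epsilon> (- x) = - UU \<epsilon> x"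
proof -
  have "Aq \<epsilon> (- x) = Bq \<epsilon> x" "Bq \<epsilon> (- x) = Aq \<epsilon> x"
  proof -
    have "- x - pa = - (x - pb)" "- x - pb = - (x - pa)" by (simp_all add: pa_pb)
    then show "Aq \<epsilon> (- x) = Bq \<epsilon> x" "Bq \<epsilon> (- x) = Aq \<epsilon> x"
      unfolding Aq_def Bq_def by (simp_all only: norm_minus_cancel)
  qed
  then show ?thesis by (simp add: UU_def)
qed

lemma mean_zero_odd:
  fixes f :: "real^2 \<Rightarrow> real"
  assumes cf: "continuous_on UNIV f" and odd: "\<And>x. f (- x) = - f x"
  shows "integral\<^sup>L (lebesgue_on diskB) f = 0"
proof -
  define V where "V x = (if x \<in> diskB then f x else 0)" for x
  have Vodd: "V (- x) = - V x" for x
    by (simp add: V_def diskB_def odd)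
  have "integral\<^sup>L (lebesgue_on diskB) f = integral diskB f"
    by (rule lebesgue_integral_eq_integral[OF cont_int[OF cf] diskB_sets])
  also have "\<dots> = integral UNIV V" unfolding V_def by (simp add: integral_restrict_UNIV)
  also have "\<dots> = integral (cbox (-1) 1) V"
    by (rule vanish_int) (use diskB_sub in \<open>auto simp: V_def\<close>)
  finally have I: "integral\<^sup>L (lebesgue_on diskB) f = integral (cbox (-1) 1) V" .
  have "integral (cbox (-1) 1) V = integral (cbox (- 1) (- (- 1))) (\<lambda>x. V (- x))"
    by (rule integral_reflect[symmetric])
  also have "\<dots> = - integral (cbox (-1) 1) V" by (simp add: Vodd)
  finally show ?thesis using I by simp
qed

lemma H_as_UU:
  assumes "\<epsilon> > 0"
  shows "H_as (UU \<epsilon>)" "weak_grad (UU \<epsilon>) (GG \<epsilon>)"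
proof -
  show wg: "weak_grad (UU \<epsilon>) (GG \<epsilon>)"
    by (rule weak_grad_C1[OF cont_UU[OF assms] cont_GG[OF assms] deriv_UU[OF assms]])
  show "H_as (UU \<epsilon>)"
  proof -
    have "H1B (UU \<epsilon>)" unfolding H1B_def using wg cont_L2B[OF cont_UU[OF assms]] by blast
    then show ?thesis unfolding H_as_def H_za_def
      using mean_zero_odd[OF cont_UU[OF assms] UU_odd] UU_sym1 UU_sym2 by simp
  qed
qed



definition Sd :: "real^2 \<Rightarrow> nat \<Rightarrow> real^2 \<Rightarrow> real" where
  "Sd p N x = (\<Sum>j\<le>N. 4^j * indicator (ball p (2/2^j)) x)"

lemma four_pow: "(4::real)^j = 2^j * 2^j"
proof -
  have "(4::real)^j = (2*2)^j" by simp
  also have "\<dots> = 2^j * 2^j" by (rule power_mult_distrib)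
  finally show ?thesis .
qed

lemma Sd_nonneg: "0 \<le> Sd p N x"
  unfolding Sd_def by (intro sum_nonneg) auto

lemma Sd_bound:
  assumes eps: "\<epsilon> > 0" and x: "dist p x < 2"
  shows "min (1 / ((norm (x - p))\<^sup>2 + \<epsilon>)) (4^N) \<le> Sd p N x"
proof (induction N)
  case 0
  have "Sd p 0 x = 1" using x by (simp add: Sd_def)
  then show ?case by simp
next
  case (Suc N)
  let ?f = "1 / ((norm (x - p))\<^sup>2 + \<epsilon>)"
  have SS: "Sd p (Suc N) x = Sd p N x + 4^(Suc N) * indicator (ball p (2/2^(Suc N))) x"
    by (simp add: Sd_def)
  show ?case
  proof (cases "x \<in> ball p (2/2^(Suc N))")
    case True
    then show ?thesis using SS Sd_nonneg[of p N x] by simp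
  next
    case False
    then have d: "dist p x \<ge> 1/2^N" by simp
    have n: "norm (x - p) = dist p x" by (simp add: dist_norm norm_minus_commute)
    have pos: "(0::real) < 1/2^N" by simp
    have sq: "(1/2^N)\<^sup>2 \<le> (norm (x - p))\<^sup>2" unfolding n using d pos by (intro power_mono) auto
    have four: "1/4^N = (1/(2::real)^N)\<^sup>2" by (simp add: power2_eq_square four_pow)
    have "1/4^N \<le> (norm (x - p))\<^sup>2 + \<epsilon>" using eps sq four by linarith
    then have "?f \<le> 4^N"
      using eps by (simp add: divide_le_eq add_nonneg_pos mult.commute)
    moreover have "(4::real)^N \<le> 4^Suc N" by simp
    ultimately have "?f \<le> 4^Suc N" by linarith
    then have "min ?f (4^Suc N) = min ?f (4^N)" using \<open>?f \<le> 4^N\<close> by (simp add: min_absorb1)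
    also have "\<dots> \<le> Sd p N x" by (rule Suc.IH)
    also have "\<dots> \<le> Sd p (Suc N) x" using SS by simp
    finally show ?thesis .
  qed
qed

lemma ball_fin: "emeasure lebesgue (ball (p::real^2) r) < \<infinity>"
  using lmeasurable_ball[of p r] by (simp add: fmeasurable_def)

lemma Sd_integrable: "integrable lebesgue (Sd p N)"
  unfolding Sd_def by (intro Bochner_Integration.integrable_sum integrable_mult_right integrable_real_indicator ball_fin) auto

lemma Sd_integral: "integral\<^sup>L lebesgue (Sd p N) = 4 * pi * (N + 1)"
proof -
  have "integral\<^sup>L lebesgue (Sd p N) = (\<Sum>j\<le>N. 4^j * measure lebesgue (ball p (2/2^j)))"
    unfolding Sd_def
    by (subst Bochner_Integration.integral_sum) (auto intro!: integrable_mult_right integrable_real_indicator ball_fin)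
  also have "\<dots> = (\<Sum>j\<le>N. 4 * pi)"
  proof (rule sum.cong)
    fix j assume "j \<in> {..N}"
    have "measure lebesgue (ball p (2/2^j)) = (2/2^j)^2 * pi" by (simp add: circle_area)
    also have "\<dots> = 4 * pi / 4^j" by (simp add: four_pow power2_eq_square)
    finally show "4^j * measure lebesgue (ball p (2/2^j)) = 4 * pi" by simp
  qed simp
  also have "\<dots> = 4 * pi * (N + 1)" by simp
  finally show ?thesis .
qed



lemma sq_diff_le: "((u::real) - v)\<^sup>2 \<le> 2 * u\<^sup>2 + 2 * v\<^sup>2"
proof -
  have "0 \<le> (u + v)\<^sup>2" by simp
  then show ?thesis by (simp add: power2_eq_square algebra_simps)
qed

lemma frac_sq_le: "(A::real) > 0 \<Longrightarrow> 0 \<le> s \<Longrightarrow> s \<le> A \<Longrightarrow> s / A\<^sup>2 \<le> 1 / A"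
  by (simp add: power2_eq_square divide_le_eq field_simps mult_right_mono)

lemma GG_pt:
  assumes "\<epsilon> > 0"
  shows "(GG \<epsilon> 1 x)\<^sup>2 + (GG \<epsilon> 2 x)\<^sup>2 \<le> 8 / Aq \<epsilon> x + 8 / Bq \<epsilon> x"
proof -
  define A where "A = Aq \<epsilon> x"
  define B where "B = Bq \<epsilon> x"
  define a1 where "a1 = (x - pa) $ 1"
  define a2 where "a2 = (x - pa) $ 2"
  define b1 where "b1 = (x - pb) $ 1"
  define b2 where "b2 = (x - pb) $ 2"
  have A: "A > 0" "a1\<^sup>2 + a2\<^sup>2 \<le> A" using Aq_pos[OF assms, of x] assms
    unfolding A_def a1_def a2_def Aq_def norm_sq2[of "x - pa"] by auto
  have B: "B > 0" "b1\<^sup>2 + b2\<^sup>2 \<le> B" using Bq_pos[OF assms, of x] assms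
    unfolding B_def b1_def b2_def Bq_def norm_sq2[of "x - pb"] by auto
  have "(GG \<epsilon> 1 x)\<^sup>2 + (GG \<epsilon> 2 x)\<^sup>2 = (2*a1/A - 2*b1/B)\<^sup>2 + (2*a2/A - 2*b2/B)\<^sup>2"
    by (simp add: GG_def A_def B_def a1_def a2_def b1_def b2_def)
  also have "\<dots> \<le> (2 * (2*a1/A)\<^sup>2 + 2 * (2*b1/B)\<^sup>2) + (2 * (2*a2/A)\<^sup>2 + 2 * (2*b2/B)\<^sup>2)"
    by (intro add_mono sq_diff_le)
  also have "\<dots> = 8 * ((a1\<^sup>2 + a2\<^sup>2) / A\<^sup>2) + 8 * ((b1\<^sup>2 + b2\<^sup>2) / B\<^sup>2)"
    by (simp add: power_divide power_mult_distrib add_divide_distrib algebra_simps)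
  also have "\<dots> \<le> 8 * (1 / A) + 8 * (1 / B)"
    using A B by (intro add_mono mult_left_mono frac_sq_le) auto
  finally show ?thesis by (simp add: A_def B_def)
qed

lemma dist_disk: "x \<in> diskB \<Longrightarrow> dist (axis 2 c) x < 2" if "\<bar>c\<bar> \<le> 1/2" for c
proof -
  assume "x \<in> diskB"
  then have "norm x < 1" by (simp add: diskB_def)
  moreover have "norm (axis 2 c :: real^2) \<le> 1/2"
  proof (rule power2_le_imp_le)
    have "(norm (axis 2 c :: real^2))\<^sup>2 = \<bar>c\<bar>\<^sup>2" by (simp add: norm_sq2 axis_def)
    also have "\<dots> \<le> (1/2)\<^sup>2" using that by (intro power_mono) auto
    finally show "(norm (axis 2 c :: real^2))\<^sup>2 \<le> (1/2)\<^sup>2" .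
  qed simp
  ultimately show ?thesis using norm_triangle_ineq4[of x "axis 2 c"] by (simp add: dist_norm norm_minus_commute)
qed

lemma energy_bound:
  assumes eps: "\<epsilon> > 0" and N: "1 / \<epsilon> \<le> 4^N"
  shows "integral\<^sup>L (lebesgue_on diskB) (\<lambda>x. (GG \<epsilon> 1 x)\<^sup>2 + (GG \<epsilon> 2 x)\<^sup>2) \<le> 64 * pi * (N + 1)"
proof -
  let ?h = "\<lambda>x. (GG \<epsilon> 1 x)\<^sup>2 + (GG \<epsilon> 2 x)\<^sup>2"
  let ?S = "\<lambda>x. 8 * Sd pa N x + 8 * Sd pb N x"
  have inv: "1 / (r + \<epsilon>) \<le> 4^N" if "r \<ge> 0" for r
  proof -
    have "1 / (r + \<epsilon>) \<le> 1 / \<epsilon>" using that eps by (intro divide_left_mono) auto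
    then show ?thesis using N by linarith
  qed
  have "integral\<^sup>L (lebesgue_on diskB) ?h = integral\<^sup>L lebesgue (\<lambda>x. indicator diskB x *\<^sub>R ?h x)"
    by (rule integral_restrict_space) (simp add: diskB_sets)
  also have "\<dots> \<le> integral\<^sup>L lebesgue ?S"
  proof (rule integral_mono')
    show "integrable lebesgue ?S" using Sd_integrable by auto
    show "0 \<le> ?S x" for x using Sd_nonneg[of pa N x] Sd_nonneg[of pb N x] by simp
    show "indicator diskB x *\<^sub>R ?h x \<le> ?S x" for x
    proof (cases "x \<in> diskB")
      case True
      have da: "dist pa x < 2" unfolding pa_def by (rule dist_disk[OF _ True]) simp
      have db: "dist pb x < 2" unfolding pb_def by (rule dist_disk[OF _ True]) simp
      have "1 / Aq \<epsilon> x \<le> Sd pa N x"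
        using Sd_bound[OF eps da, of N] inv[of "(norm (x - pa))\<^sup>2"] unfolding Aq_def by (simp add: min_absorb1)
      moreover have "1 / Bq \<epsilon> x \<le> Sd pb N x"
        using Sd_bound[OF eps db, of N] inv[of "(norm (x - pb))\<^sup>2"] unfolding Bq_def by (simp add: min_absorb1)
      ultimately show ?thesis using GG_pt[OF eps, of x] True by simp
    next
      case False
      then show ?thesis using Sd_nonneg[of pa N x] Sd_nonneg[of pb N x] by simp
    qed
  qed
  also have "\<dots> = 8 * (4 * pi * (N + 1)) + 8 * (4 * pi * (N + 1))"
    using Sd_integrable by (simp add: Sd_integral)
  also have "\<dots> = 64 * pi * (N + 1)" by simp
  finally show ?thesis .
qed



lemma cont_powU: "\<epsilon> > 0 \<Longrightarrow> p > 0 \<Longrightarrow> continuous_on UNIV (\<lambda>x. \<bar>UU \<epsilon> x\<bar> powr p)"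
  by (intro continuous_on_powr' continuous_intros cont_UU) auto

lemma pb_pa: "pb - pa = axis 2 1" by (simp add: pa_def pb_def vec_eq_iff axis_def)

lemma UU_big:
  assumes eps: "\<epsilon> > 0" and x: "dist pb x < sqrt \<epsilon>" and e4: "\<epsilon> \<le> 1/4"
  shows "ln (1 / (8 * \<epsilon>)) \<le> UU \<epsilon> x"
proof -
  have n: "norm (x - pb) < sqrt \<epsilon>" using x by (simp add: dist_norm norm_minus_commute)
  have "(norm (x - pb))\<^sup>2 < (sqrt \<epsilon>)\<^sup>2" using n by (intro power_strict_mono) auto
  then have B: "Bq \<epsilon> x < 2 * \<epsilon>" using eps unfolding Bq_def by simp
  have "sqrt \<epsilon> \<le> sqrt (1/4)" using e4 by (rule real_sqrt_le_mono)
  also have "sqrt (1/4) = (1/2::real)" by (simp add: real_sqrt_divide)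
  finally have n2: "norm (x - pb) \<le> 1/2" using n by linarith
  have "1 = norm (pb - pa)" by (simp add: pb_pa)
  also have "\<dots> \<le> norm (x - pa) + norm (x - pb)"
    using norm_triangle_ineq4[of "x - pa" "x - pb"] by simp
  finally have "1/2 \<le> norm (x - pa)" using n2 by linarith
  then have "(1/2)\<^sup>2 \<le> (norm (x - pa))\<^sup>2" by (intro power_mono) auto
  then have A: "1/4 \<le> Aq \<epsilon> x" using eps unfolding Aq_def by (simp add: power2_eq_square)
  have "ln (1/4) \<le> ln (Aq \<epsilon> x)" using A by simp
  moreover have "ln (Bq \<epsilon> x) \<le> ln (2 * \<epsilon>)" using B Bq_pos[OF eps, of x] by simp
  moreover have "ln (1 / (8 * \<epsilon>)) = ln (1/4) - ln (2 * \<epsilon>)"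
  proof -
    have "ln ((1/4) / (2*\<epsilon>)) = ln (1/4) - ln (2*\<epsilon>)" using eps by (intro ln_divide_pos) auto
    moreover have "(1/4) / (2*\<epsilon>) = 1 / (8*\<epsilon>)" by simp
    ultimately show ?thesis by simp
  qed
  ultimately show ?thesis unfolding UU_def by linarith
qed

lemma ball_in_disk:
  assumes "\<epsilon> > 0" "\<epsilon> \<le> 1/4"
  shows "ball pb (sqrt \<epsilon>) \<subseteq> diskB"
proof
  fix x assume "x \<in> ball pb (sqrt \<epsilon>)"
  then have "dist pb x < sqrt \<epsilon>" by simp
  moreover have "sqrt \<epsilon> \<le> sqrt (1/4)" using assms by (intro real_sqrt_le_mono) auto
  moreover have "sqrt (1/4) = (1/2::real)" by (simp add: real_sqrt_divide)
  moreover have "norm pb = 1/2"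
  proof -
    have "(norm pb)\<^sup>2 = (1/2)\<^sup>2" by (simp add: norm_sq2 pb_comp)
    then show ?thesis by (simp add: power2_eq_iff_nonneg)
  qed
  ultimately have "norm x < 1" using norm_triangle_ineq2[of x pb] by (simp add: dist_norm norm_minus_commute)
  then show "x \<in> diskB" by (simp add: diskB_def)
qed

lemma lower_bound:
  assumes eps: "\<epsilon> > 0" "\<epsilon> \<le> 1/8" and p: "p > 0"
  shows "ln (1 / (8 * \<epsilon>)) powr p * (pi * \<epsilon>) \<le> integral\<^sup>L (lebesgue_on diskB) (\<lambda>x. \<bar>UU \<epsilon> x\<bar> powr p)"
proof -
  define M where "M = ln (1 / (8 * \<epsilon>))"
  have M0: "0 \<le> M" unfolding M_def using eps by (simp add: field_simps)
  let ?g = "\<lambda>x. \<bar>UU \<epsilon> x\<bar> powr p"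
  have e4: "\<epsilon> \<le> 1/4" using eps by simp
  have "M powr p * (pi * \<epsilon>) = integral\<^sup>L lebesgue (\<lambda>x. M powr p * indicator (ball pb (sqrt \<epsilon>)) x)"
    using eps by (simp add: circle_area ball_fin)
  also have "\<dots> \<le> integral\<^sup>L lebesgue (\<lambda>x. indicator diskB x *\<^sub>R ?g x)"
  proof (rule integral_mono)
    show "integrable lebesgue (\<lambda>x. M powr p * indicator (ball pb (sqrt \<epsilon>)) x)"
      by (intro integrable_mult_right integrable_real_indicator ball_fin) auto
    show "integrable lebesgue (\<lambda>x. indicator diskB x *\<^sub>R ?g x)"
      using cont_int[OF cont_powU[OF eps(1) p]] diskB_sets
      by (simp add: integrable_restrict_space)
    show "M powr p * indicator (ball pb (sqrt \<epsilon>)) x \<le> indicator diskB x *\<^sub>R ?g x" for x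
    proof (cases "x \<in> ball pb (sqrt \<epsilon>)")
      case True
      then have "x \<in> diskB" using ball_in_disk[OF eps(1) e4] by blast
      moreover have "M \<le> \<bar>UU \<epsilon> x\<bar>" using UU_big[OF eps(1) _ e4, of x] True unfolding M_def by simp
      ultimately show ?thesis using True M0 p by (simp add: powr_mono2)
    qed simp
  qed
  also have "\<dots> = integral\<^sup>L (lebesgue_on diskB) ?g"
    by (rule integral_restrict_space[symmetric]) (simp add: diskB_sets)
  finally show ?thesis unfolding M_def .
qed



lemma ln4: "ln (4::real) = 2 * ln 2"
  using ln_realpow[of 2 2] by simp
lemma ln8: "ln (8::real) = 3 * ln 2"
  using ln_realpow[of 2 3] by simp

lemma elem_bound:
  fixes p :: real assumes p: "p \<ge> 3"
  shows "\<exists>u g. H_as u \<and> weak_grad u g \<and> \<not> (AE x in lebesgue_on diskB. u x = 0) \<and>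
     (integral\<^sup>L (lebesgue_on diskB) (\<lambda>x. (g 1 x)\<^sup>2 + (g 2 x)\<^sup>2))
       / (integral\<^sup>L (lebesgue_on diskB) (\<lambda>x. \<bar>u x\<bar> powr p)) powr (2 / p)
     \<le> (32768 * pi / (ln 2)\<^sup>2) / p"
proof -
  define N where "N = nat \<lceil>p\<rceil>"
  have Np: "p \<le> real N" "real N \<le> p + 1" unfolding N_def using p by linarith+
  have N3: "N \<ge> 3" using Np p by linarith
  define \<epsilon> :: real where "\<epsilon> = 1 / 4^N"
  have eps: "\<epsilon> > 0" unfolding \<epsilon>_def by simp
  have "(4::real)^3 \<le> 4^N" using N3 by (intro power_increasing) auto
  then have e8: "\<epsilon> \<le> 1/8" unfolding \<epsilon>_def by (simp add: field_simps)
  have invN: "1 / \<epsilon> \<le> 4^N" unfolding \<epsilon>_def by simp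
  define M where "M = ln (1 / (8 * \<epsilon>))"
  have "M = ln (4^N / 8)" unfolding M_def \<epsilon>_def by simp
  also have "\<dots> = real N * ln 4 - ln 8" by (simp add: ln_div ln_realpow)
  finally have M: "M = (2 * real N - 3) * ln 2" by (simp add: ln4 ln8 algebra_simps)
  have ln2: "ln (2::real) > 0" by simp
  have t1: "(real N - 3) * ln 2 \<ge> 0" using N3 ln2 by (intro mult_nonneg_nonneg) auto
  have t2: "M = real N * ln 2 + (real N - 3) * ln 2" unfolding M by (simp add: algebra_simps)
  have MN: "real N * ln 2 \<le> M" using t1 t2 by linarith
  have t3: "real N * ln 2 > 0" using N3 ln2 by (intro mult_pos_pos) auto
  have Mpos: "M > 0" using MN t3 by linarith
  have pp: "p > 0" using p by simp
  define u where "u = UU \<epsilon>"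
  define g where "g = GG \<epsilon>"
  define E where "E = integral\<^sup>L (lebesgue_on diskB) (\<lambda>x. (g 1 x)\<^sup>2 + (g 2 x)\<^sup>2)"
  define D where "D = integral\<^sup>L (lebesgue_on diskB) (\<lambda>x. \<bar>u x\<bar> powr p)"
  have E: "E \<le> 64 * pi * (N + 1)" unfolding E_def g_def by (rule energy_bound[OF eps invN])
  have Dlow: "M powr p * (pi * \<epsilon>) \<le> D" unfolding D_def u_def M_def by (rule lower_bound[OF eps e8 pp])
  have lowpos: "M powr p * (pi * \<epsilon>) > 0" using Mpos eps by simp
  have notAE: "\<not> (AE x in lebesgue_on diskB. u x = 0)"
  proof
    assume "AE x in lebesgue_on diskB. u x = 0"
    then have "AE x in lebesgue_on diskB. \<bar>u x\<bar> powr p = 0" by eventually_elim simp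
    then have "D = integral\<^sup>L (lebesgue_on diskB) (\<lambda>x. 0::real)" unfolding D_def
      using continuous_imp_measurable_on_sets_lebesgue[OF continuous_on_subset[OF cont_powU[OF eps pp], of diskB] diskB_sets]
      by (intro integral_cong_AE) (auto simp: u_def)
    then show False using Dlow lowpos by simp
  qed
  have d1: "(M powr p * (pi * \<epsilon>)) powr (2/p) \<le> D powr (2/p)"
    using Dlow lowpos pp by (intro powr_mono2) auto
  have d2: "(M powr p * (pi * \<epsilon>)) powr (2/p) = M\<^sup>2 * (pi * \<epsilon>) powr (2/p)"
    using Mpos eps pp by (simp add: powr_mult powr_powr powr_numeral)
  have d3: "\<epsilon> powr (2/p) \<le> (pi * \<epsilon>) powr (2/p)"
    using eps pp pi_gt3 by (intro powr_mono2) auto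
  have d4: "\<epsilon> powr (2/p) = 4 powr (- (2 * real N / p))"
  proof -
    have "\<epsilon> = 4 powr (- real N)" unfolding \<epsilon>_def by (simp add: powr_minus powr_realpow divide_inverse)
    then have "\<epsilon> powr (2/p) = 4 powr (- real N * (2/p))" by (simp add: powr_powr)
    also have "- real N * (2/p) = - (2 * real N / p)" by simp
    finally show ?thesis .
  qed
  have d5: "(4::real) powr (-4) \<le> 4 powr (- (2 * real N / p))"
  proof (rule powr_mono)
    have "2 * real N \<le> 4 * p" using Np p by linarith
    then show "- 4 \<le> - (2 * real N / p)" using pp by (simp add: field_simps)
  qed simp
  have d6: "(4::real) powr (-4) = 1/256" by (simp add: powr_minus powr_numeral)
  have Q: "1/256 \<le> (pi * \<epsilon>) powr (2/p)" using d3 d4 d5 d6 by linarith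
  have "M\<^sup>2 * (1/256) \<le> M\<^sup>2 * (pi * \<epsilon>) powr (2/p)"
    using Q by (intro mult_left_mono) auto
  then have Dp: "M\<^sup>2 / 256 \<le> D powr (2/p)" using d1 d2 by simp
  have M2: "M\<^sup>2 / 256 > 0" using Mpos by simp
  have "E / D powr (2/p) \<le> (64 * pi * (N + 1)) / (M\<^sup>2 / 256)"
    using E Dp M2 by (intro frac_le) auto
  also have "\<dots> \<le> (64 * pi * (2 * real N)) / ((real N * ln 2)\<^sup>2 / 256)"
  proof -
    have h1: "real (N + 1) \<le> 2 * real N" using N3 by simp
    have h1': "64 * pi * (N + 1) \<le> 64 * pi * (2 * real N)"
      using h1 by (intro mult_left_mono) auto
    have h2: "(real N * ln 2)\<^sup>2 \<le> M\<^sup>2" using MN t3 by (intro power_mono) auto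
    have h2': "(real N * ln 2)\<^sup>2 / 256 \<le> M\<^sup>2 / 256" using h2 by simp
    have h3: "0 < (real N * ln 2)\<^sup>2 / 256" using t3 N3 by simp
    have h4: "0 \<le> 64 * pi * (2 * real N)" by simp
    show ?thesis by (rule frac_le[OF h4 h1' h3 h2'])
  qed
  also have "\<dots> = (32768 * pi / (ln 2)\<^sup>2) / real N"
    using N3 ln2 by (simp add: power2_eq_square field_simps)
  also have "\<dots> \<le> (32768 * pi / (ln 2)\<^sup>2) / p"
    using Np pp by (intro divide_left_mono) auto
  finally have R: "E / D powr (2/p) \<le> (32768 * pi / (ln 2)\<^sup>2) / p" .
  show ?thesis
    using H_as_UU[OF eps] notAE R unfolding u_def g_def E_def D_def by blast
qed



theorem corollary7p3:
  shows "(Lambda' \<longlongrightarrow> 0) at_top"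
proof -
  define C where "C = 32768 * pi / (ln 2)\<^sup>2"
  define S where "S p = {(integral\<^sup>L (lebesgue_on diskB) (\<lambda>x. (g 1 x)^2 + (g 2 x)^2))
                      / (integral\<^sup>L (lebesgue_on diskB) (\<lambda>x. \<bar>u x\<bar> powr p)) powr (2 / p)
                    | u g. H_as u \<and> weak_grad u g \<and> \<not> (AE x in lebesgue_on diskB. u x = 0)}" for p
  have L: "Lambda' p = Inf (S p)" for p unfolding Lambda'_def S_def ..
  have nn: "0 \<le> y" if "y \<in> S p" for y p
  proof -
    from that obtain u and g :: "2 \<Rightarrow> real^2 \<Rightarrow> real" where y: "y = (integral\<^sup>L (lebesgue_on diskB) (\<lambda>x. (g 1 x)^2 + (g 2 x)^2))
                      / (integral\<^sup>L (lebesgue_on diskB) (\<lambda>x. \<bar>u x\<bar> powr p)) powr (2 / p)"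
      unfolding S_def by blast
    have "0 \<le> integral\<^sup>L (lebesgue_on diskB) (\<lambda>x. (g 1 x)^2 + (g 2 x)^2)"
      by (intro integral_nonneg_AE AE_I2) simp
    then show ?thesis unfolding y by (intro divide_nonneg_nonneg) auto
  qed
  have both: "0 \<le> Lambda' p \<and> Lambda' p \<le> C / p" if p: "p \<ge> 3" for p
  proof -
    obtain u g where ug: "H_as u" "weak_grad u g" "\<not> (AE x in lebesgue_on diskB. u x = 0)"
      "(integral\<^sup>L (lebesgue_on diskB) (\<lambda>x. (g 1 x)\<^sup>2 + (g 2 x)\<^sup>2))
       / (integral\<^sup>L (lebesgue_on diskB) (\<lambda>x. \<bar>u x\<bar> powr p)) powr (2 / p) \<le> C / p"
      using elem_bound[OF p] unfolding C_def by blast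
    let ?y = "(integral\<^sup>L (lebesgue_on diskB) (\<lambda>x. (g 1 x)\<^sup>2 + (g 2 x)\<^sup>2))
       / (integral\<^sup>L (lebesgue_on diskB) (\<lambda>x. \<bar>u x\<bar> powr p)) powr (2 / p)"
    have mem: "?y \<in> S p" unfolding S_def using ug(1-3) by blast
    have bdd: "bdd_below (S p)" using nn by (intro bdd_belowI[of _ 0]) auto
    have "Inf (S p) \<le> ?y" by (rule cInf_lower[OF mem bdd])
    moreover have "0 \<le> Inf (S p)" using mem nn by (intro cInf_greatest) auto
    ultimately show ?thesis using ug(4) L by simp
  qed
  show ?thesis
  proof (rule tendsto_sandwich[of "\<lambda>_. 0" _ _ "\<lambda>p. C / p"])
    show "\<forall>\<^sub>F p in at_top. (0::real) \<le> Lambda' p"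
      using eventually_ge_at_top[of "3::real"] by eventually_elim (use both in blast)
    show "\<forall>\<^sub>F p in at_top. Lambda' p \<le> C / p"
      using eventually_ge_at_top[of "3::real"] by eventually_elim (use both in blast)
    show "((\<lambda>_. 0::real) \<longlongrightarrow> 0) at_top" by simp
    show "((\<lambda>p::real. C / p) \<longlongrightarrow> 0) at_top"
      by (intro tendsto_divide_0[OF tendsto_const] filterlim_at_top_imp_at_infinity filterlim_ident)
  qed
qed


end
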